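(* Let $\mathcal{M}=(M_i\colon i\in K)$ be a family of matroids on a common ground set $E$. Let $(I_i\colon i\in K)$ be a family of pairwise disjoint sets such that $I_i$ is independent in $M_i$ for all $i\in K$, and let $e\in E\setminus\bigcup_{i\in K}I_i$. Then exactly one of the following two statements holds. (1) There are a family of sets $(J_i\colon i\in K)$ and $k\in K$ such that: (a) $J_i$ is independent in $M_i$ for all $i$; (b) $J_i\cap J_j=\emptyset$ for $i\neq j$; (c) $\bigcup_{i\in K}J_i=\bigcup_{i\in K}I_i\cup\{e\}$; (d) $\sum_{i\in K}|I_i\triangle J_i|<\aleph_0$; (e) $\mathrm{span}_{M_i}(J_i)=\mathrm{span}_{M_i}(I_i)$ for all $i\neq k$, and $\mathrm{span}_{M_k}(J_k\setminus\{f\})=\mathrm{span}_{M_k}(I_k)$ for some $f\in J_k$. (2) There exists $X\subseteq\bigcup_{i\in K}I_i$ such that for every $i\in K$ the set $I_i\cap X$ spans $X\cup\{e\}$ in $M_i$.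
   Context: Matroids here are possibly infinite: a matroid is a pair $(E,\mathcal{I})$ with $\mathcal{I}\subseteq\mathcal{P}(E)$ such that (1) $\emptyset\in\mathcal{I}$; (2) $\mathcal{I}$ is closed under subsets; (3) for all $I,B\in\mathcal{I}$ with $B$ maximal in $\mathcal{I}$ and $I$ not maximal, there is $x\in B\setminus I$ with $I\cup\{x\}\in\mathcal{I}$; (4) for every $X\subseteq E$, every $I\in\mathcal{I}$ with $I\subseteq X$ extends to a maximal element of $\mathcal{I}\cap\mathcal{P}(X)$. Circuits are minimal dependent sets. A set $X$ spans $e$ in $M$ if $e\in X$ or there is a circuit $C\ni e$ with $C\setminus\{e\}\subseteq X$; $\mathrm{span}_M(X)$ is the set of elements spanned by $X$, and $X$ spans a set $Y$ if $Y\subseteq\mathrm{span}_M(X)$. *)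

theory Defs
  imports Main
begin

definition maximal_in :: "'a set set \<Rightarrow> 'a set \<Rightarrow> bool" where
  "maximal_in F B \<longleftrightarrow> B \<in> F \<and> (\<forall>B'\<in>F. B \<subseteq> B' \<longrightarrow> B' = B)"

definition matroid :: "'a set \<Rightarrow> 'a set set \<Rightarrow> bool" where
  "matroid E Ind \<longleftrightarrow>
     Ind \<subseteq> Pow E \<and>
     {} \<in> Ind \<and>
     (\<forall>A\<in>Ind. \<forall>B. B \<subseteq> A \<longrightarrow> B \<in> Ind) \<and>
     (\<forall>I\<in>Ind. \<forall>B\<in>Ind. maximal_in Ind B \<and> \<not> maximal_in Ind I \<longrightarrow>
         (\<exists>x\<in>B - I. insert x I \<in> Ind)) \<and>
     (\<forall>X. X \<subseteq> E \<longrightarrow> (\<forall>I\<in>Ind. I \<subseteq> X \<longrightarrow>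
         (\<exists>B. maximal_in (Ind \<inter> Pow X) B \<and> I \<subseteq> B)))"

definition circuit :: "'a set \<Rightarrow> 'a set set \<Rightarrow> 'a set \<Rightarrow> bool" where
  "circuit E Ind C \<longleftrightarrow> C \<subseteq> E \<and> C \<notin> Ind \<and> (\<forall>D. D \<subset> C \<longrightarrow> D \<in> Ind)"

definition spans_elem :: "'a set \<Rightarrow> 'a set set \<Rightarrow> 'a set \<Rightarrow> 'a \<Rightarrow> bool" where
  "spans_elem E Ind X e \<longleftrightarrow> e \<in> X \<or> (\<exists>C. circuit E Ind C \<and> e \<in> C \<and> C - {e} \<subseteq> X)"

definition span :: "'a set \<Rightarrow> 'a set set \<Rightarrow> 'a set \<Rightarrow> 'a set" where
  "span E Ind X = {e \<in> E. spans_elem E Ind X e}"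

end

theory Submission
  imports Defs
begin

lemma m_pow: assumes "matroid E Ind" shows "Ind \<subseteq> Pow E"
  using assms unfolding matroid_def by (elim conjE) assumption

lemma m_emp: assumes "matroid E Ind" shows "{} \<in> Ind"
  using assms unfolding matroid_def by (elim conjE) assumption

lemma m_dc: assumes "matroid E Ind" shows "\<forall>A\<in>Ind. \<forall>B. B \<subseteq> A \<longrightarrow> B \<in> Ind"
  using assms unfolding matroid_def by (elim conjE) assumption

lemma m_i3: assumes "matroid E Ind" shows "\<forall>I\<in>Ind. \<forall>B\<in>Ind. maximal_in Ind B \<and> \<not> maximal_in Ind I \<longrightarrow>
         (\<exists>x\<in>B - I. insert x I \<in> Ind)"
  using assms unfolding matroid_def by (elim conjE) assumption

lemma m_im: assumes "matroid E Ind" shows "\<forall>X. X \<subseteq> E \<longrightarrow> (\<forall>I\<in>Ind. I \<subseteq> X \<longrightarrow>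
         (\<exists>B. maximal_in (Ind \<inter> Pow X) B \<and> I \<subseteq> B))"
  using assms unfolding matroid_def by (elim conjE) assumption

lemma m_subE: "matroid E Ind \<Longrightarrow> I \<in> Ind \<Longrightarrow> I \<subseteq> E"
  using m_pow by blast

lemma m_sub: "matroid E Ind \<Longrightarrow> A \<in> Ind \<Longrightarrow> B \<subseteq> A \<Longrightarrow> B \<in> Ind"
  using m_dc by blast

lemma m_aug: "matroid E Ind \<Longrightarrow> I \<in> Ind \<Longrightarrow> maximal_in Ind B \<Longrightarrow> \<not> maximal_in Ind I
   \<Longrightarrow> \<exists>x\<in>B-I. insert x I \<in> Ind"
  using m_i3[of E Ind] unfolding maximal_in_def by blast

lemma m_ext: "matroid E Ind \<Longrightarrow> X \<subseteq> E \<Longrightarrow> I \<in> Ind \<Longrightarrow> I \<subseteq> X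
   \<Longrightarrow> \<exists>B. maximal_in (Ind \<inter> Pow X) B \<and> I \<subseteq> B"
  using m_im by blast

lemma max_Pow_E: "matroid E Ind \<Longrightarrow> maximal_in (Ind \<inter> Pow E) B \<Longrightarrow> maximal_in Ind B"
  using m_pow[of E Ind] unfolding maximal_in_def by blast

lemma maxI_loc: "B \<in> Ind \<Longrightarrow> B \<subseteq> X \<Longrightarrow> (\<forall>u\<in>X-B. insert u B \<notin> Ind) \<Longrightarrow> matroid E Ind
   \<Longrightarrow> maximal_in (Ind \<inter> Pow X) B"
  unfolding maximal_in_def
proof (intro conjI ballI impI)
  fix B' assume a: "B \<in> Ind" "B \<subseteq> X" "\<forall>u\<in>X-B. insert u B \<notin> Ind" "matroid E Ind"
    "B' \<in> Ind \<inter> Pow X" "B \<subseteq> B'"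
  show "B' = B"
  proof (rule ccontr)
    assume "B' \<noteq> B"
    then obtain u where "u \<in> B' - B" using a by blast
    then have "insert u B \<subseteq> B'" using a by blast
    then have "insert u B \<in> Ind" using a(5) m_sub[OF a(4), of B' "insert u B"] by blast
    then show False using a \<open>u \<in> B' - B\<close> by blast
  qed
qed (auto)

lemma RI3:
  assumes M: "matroid E Ind" and XE: "X \<subseteq> E" and I: "I \<in> Ind" "I \<subseteq> X"
    and B: "maximal_in (Ind \<inter> Pow X) B" and nI: "\<not> maximal_in (Ind \<inter> Pow X) I"
  shows "\<exists>x\<in>B-I. insert x I \<in> Ind"
proof (rule ccontr)
  assume H: "\<not> (\<exists>x\<in>B-I. insert x I \<in> Ind)"
  have BI: "B \<in> Ind" "B \<subseteq> X" and Bmax: "\<And>B'. B' \<in> Ind \<Longrightarrow> B' \<subseteq> X \<Longrightarrow> B \<subseteq> B' \<Longrightarrow> B' = B"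
    using B unfolding maximal_in_def by auto
  obtain I' where I': "I' \<in> Ind" "I' \<subseteq> X" "I \<subseteq> I'" "I' \<noteq> I"
    using nI I unfolding maximal_in_def by auto
  then obtain y where y: "y \<in> I' - I" by blast
  have yI0: "insert y I \<subseteq> I'" using y I'(3) by blast
  have yI: "insert y I \<in> Ind" using m_sub[OF M I'(1) yI0] .
  have yX: "y \<in> X" using y I' by blast
  have yB: "y \<notin> B" using H y yI by blast
  obtain Bp where Bp: "maximal_in (Ind \<inter> Pow E) Bp" "B \<subseteq> Bp"
    using m_ext[OF M order_refl BI(1) ] BI XE by blast
  have Bpm: "maximal_in Ind Bp" using max_Pow_E[OF M Bp(1)] .
  have BpI: "Bp \<in> Ind" using Bpm unfolding maximal_in_def by blast
  have BpE: "Bp \<subseteq> E" using m_subE[OF M BpI] .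
  have BpX: "Bp \<inter> X = B"
  proof (rule Bmax)
    show "Bp \<inter> X \<in> Ind" using m_sub[OF M BpI, of "Bp \<inter> X"] by blast
  qed (use Bp(2) BI(2) in auto)
  define W where "W = insert y I \<union> Bp"
  have WE: "W \<subseteq> E" unfolding W_def using BpE yX XE I(2) by blast
  obtain J where J: "maximal_in (Ind \<inter> Pow W) J" "insert y I \<subseteq> J"
    using m_ext[OF M WE yI] W_def by blast
  have JI: "J \<in> Ind" "J \<subseteq> W" and Jmax: "\<And>B'. B' \<in> Ind \<Longrightarrow> B' \<subseteq> W \<Longrightarrow> J \<subseteq> B' \<Longrightarrow> B' = J"
    using J unfolding maximal_in_def by auto
  have Jm: "maximal_in Ind J"
  proof (rule ccontr)
    assume "\<not> maximal_in Ind J"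
    then obtain z where z: "z \<in> Bp - J" "insert z J \<in> Ind" using m_aug[OF M JI(1) Bpm] by blast
    have "insert z J \<subseteq> W" using z JI W_def by blast
    then have "insert z J = J" using Jmax z by blast
    then show False using z by blast
  qed
  have JX: "J \<inter> X \<subseteq> insert y I"
  proof
    fix u assume u: "u \<in> J \<inter> X"
    show "u \<in> insert y I"
    proof (rule ccontr)
      assume nu: "u \<notin> insert y I"
      then have "u \<in> B" using u JI(2) BpX W_def by blast
      moreover have "insert u I \<in> Ind" by (rule m_sub[OF M JI(1)]) (use u J(2) in blast)
      ultimately show False using H nu by blast
    qed
  qed
  define R where "R = J - X"
  define P where "P = B \<union> R"
  have RBp: "R \<subseteq> Bp" unfolding R_def using JI(2) W_def yX I(2) by blast
  have PI: "P \<in> Ind" by (rule m_sub[OF M BpI]) (use RBp Bp(2) P_def in blast)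
  have Pm: "maximal_in Ind P"
  proof (rule ccontr)
    assume "\<not> maximal_in Ind P"
    then obtain z where z: "z \<in> J - P" "insert z P \<in> Ind" using m_aug[OF M PI Jm] by blast
    have zX: "z \<in> X" using z unfolding P_def R_def by blast
    have "insert z B \<in> Ind" by (rule m_sub[OF M z(2)]) (use P_def in blast)
    then have "insert z B = B" using Bmax zX BI by blast
    then show False using z P_def by blast
  qed
  have "\<not> maximal_in Ind (J - {y})"
  proof
    assume "maximal_in Ind (J - {y})"
    then have "J = J - {y}" using JI(1) unfolding maximal_in_def by blast
    then show False using J(2) by blast
  qed
  then obtain z where z: "z \<in> P - (J - {y})" "insert z (J - {y}) \<in> Ind"
    using m_aug[OF M m_sub[OF M JI(1)] Pm, of "J - {y}"] by blast
  have zB: "z \<in> B" using z yX unfolding P_def R_def by blast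
  have zI: "z \<notin> I" using z J(2) zB yB by blast
  have "insert z I \<in> Ind" by (rule m_sub[OF M z(2)]) (use J(2) y in blast)
  then show False using H zB zI by blast
qed

lemma RI3':
  assumes M: "matroid E Ind" and XE: "X \<subseteq> E" and B: "maximal_in (Ind \<inter> Pow X) B"
    and I: "I \<in> Ind" and I': "I' \<in> Ind" "I \<subseteq> I'" "I \<noteq> I'" "I' \<subseteq> X"
  shows "\<exists>x\<in>B-I. insert x I \<in> Ind"
proof (rule RI3[OF M XE I])
  show "I \<subseteq> X" using I' by blast
  show "\<not> maximal_in (Ind \<inter> Pow X) I"
    unfolding maximal_in_def using I' by blast
qed (rule B)

definition fc :: "'a set set \<Rightarrow> 'a set \<Rightarrow> 'a \<Rightarrow> 'a set" where
  "fc Ind I x = insert x {z \<in> I. insert x (I - {z}) \<in> Ind}"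

lemma T1:
  assumes M: "matroid E Ind" and I: "I \<in> Ind" and x: "x \<in> E" "x \<notin> I" and dep: "insert x I \<notin> Ind"
  shows "circuit E Ind (fc Ind I x)"
proof -
  have IE: "I \<subseteq> E" using m_subE[OF M I] .
  have CE: "fc Ind I x \<subseteq> E" unfolding fc_def using IE x by blast
  have CxI: "fc Ind I x \<subseteq> insert x I" unfolding fc_def by blast
  have ZE: "insert x I \<subseteq> E" using IE x by blast
  have Cdep: "fc Ind I x \<notin> Ind"
  proof
    assume Cin: "fc Ind I x \<in> Ind"
    obtain J where J: "maximal_in (Ind \<inter> Pow (insert x I)) J" "fc Ind I x \<subseteq> J"
      using m_ext[OF M ZE Cin CxI] by blast
    have JI: "J \<in> Ind" "J \<subseteq> insert x I" using J(1) unfolding maximal_in_def by auto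
    have xJ: "x \<in> J" using J(2) unfolding fc_def by blast
    have "J \<noteq> insert x I" using JI dep by blast
    then obtain t where t: "t \<in> I" "t \<notin> J" using JI xJ by blast
    have It: "I - {t} \<in> Ind" using m_sub[OF M I, of "I - {t}"] by blast
    obtain u where u: "u \<in> J - (I - {t})" "insert u (I - {t}) \<in> Ind"
      using RI3'[OF M ZE J(1) It I] t by blast
    have "u = x" using u JI t by blast
    then have "t \<in> fc Ind I x" using u t unfolding fc_def by blast
    then show False using J(2) t by blast
  qed
  have "\<forall>D. D \<subset> fc Ind I x \<longrightarrow> D \<in> Ind"
  proof (intro allI impI)
    fix D assume D: "D \<subset> fc Ind I x"
    show "D \<in> Ind"
    proof (cases "x \<in> D")
      case False
      then have "D \<subseteq> I" using D unfolding fc_def by blast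
      then show ?thesis using m_sub[OF M I] by blast
    next
      case True
      then obtain z where z: "z \<in> fc Ind I x" "z \<notin> D" using D by blast
      then have zz: "z \<noteq> x" "z \<in> I" "insert x (I - {z}) \<in> Ind" using True unfolding fc_def by auto
      have "D \<subseteq> insert x (I - {z})" using D z unfolding fc_def by blast
      then show ?thesis using m_sub[OF M zz(3)] by blast
    qed
  qed
  then show ?thesis unfolding circuit_def using CE Cdep by blast
qed

lemma S1:
  assumes M: "matroid E Ind" and I: "I \<in> Ind"
  shows "x \<in> span E Ind I \<longleftrightarrow> x \<in> E \<and> (x \<in> I \<or> insert x I \<notin> Ind)"
proof
  assume "x \<in> span E Ind I"
  then have xE: "x \<in> E" and se: "x \<in> I \<or> (\<exists>C. circuit E Ind C \<and> x \<in> C \<and> C - {x} \<subseteq> I)"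
    unfolding span_def spans_elem_def by auto
  show "x \<in> E \<and> (x \<in> I \<or> insert x I \<notin> Ind)"
  proof (cases "x \<in> I")
    case False
    then obtain C where C: "circuit E Ind C" "x \<in> C" "C - {x} \<subseteq> I" using se by blast
    have "insert x I \<notin> Ind"
    proof
      assume "insert x I \<in> Ind"
      then have "C \<in> Ind" using m_sub[OF M, of "insert x I" C] C by blast
      then show False using C(1) unfolding circuit_def by blast
    qed
    then show ?thesis using xE by blast
  qed (use xE in blast)
next
  assume a: "x \<in> E \<and> (x \<in> I \<or> insert x I \<notin> Ind)"
  show "x \<in> span E Ind I"
  proof (cases "x \<in> I")
    case True then show ?thesis using a unfolding span_def spans_elem_def by blast
  next
    case False
    have "circuit E Ind (fc Ind I x)" using T1[OF M I] a False by blast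
    moreover have "x \<in> fc Ind I x" "fc Ind I x - {x} \<subseteq> I" unfolding fc_def by auto
    ultimately show ?thesis using a unfolding span_def spans_elem_def by blast
  qed
qed

lemma circ_unique:
  assumes M: "matroid E Ind" and I: "I \<in> Ind" and x: "x \<notin> I" and C: "circuit E Ind C"
    and CI: "C \<subseteq> insert x I" and z: "z \<in> C" "z \<noteq> x"
  shows "insert x (I - {z}) \<in> Ind"
proof (rule ccontr)
  assume N: "insert x (I - {z}) \<notin> Ind"
  have Cd: "C \<notin> Ind" "C \<subseteq> E" and Cm: "\<And>D. D \<subset> C \<Longrightarrow> D \<in> Ind"
    using C unfolding circuit_def by auto
  have xC: "x \<in> C"
  proof (rule ccontr)
    assume "x \<notin> C"
    then have "C \<subseteq> I" using CI by blast
    then show False using m_sub[OF M I] Cd by blast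
  qed
  have zI: "z \<in> I" using z CI by blast
  have Cz: "C - {z} \<in> Ind" using Cm[of "C - {z}"] z by blast
  have ZE: "insert x I \<subseteq> E" using m_subE[OF M I] xC Cd by blast
  obtain B where B: "maximal_in (Ind \<inter> Pow (insert x I)) B" "C - {z} \<subseteq> B"
    using m_ext[OF M ZE Cz] CI by blast
  have BI: "B \<in> Ind" "B \<subseteq> insert x I" using B(1) unfolding maximal_in_def by auto
  have zB: "z \<notin> B"
  proof
    assume "z \<in> B"
    then have "C \<subseteq> B" using B(2) by blast
    then show False using m_sub[OF M BI(1)] Cd by blast
  qed
  have Iz: "I - {z} \<in> Ind" using m_sub[OF M I, of "I - {z}"] by blast
  obtain u where u: "u \<in> B - (I - {z})" "insert u (I - {z}) \<in> Ind"
    using RI3'[OF M ZE B(1) Iz I] zI by blast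
  have "u = x" using u BI zB by blast
  then show False using u N by blast
qed

lemma e2:
  assumes M: "matroid E Ind" and B: "B \<in> Ind" and ax: "a \<in> E" "x \<in> E" "a \<notin> B" "x \<notin> B" "x \<noteq> a"
    and da: "insert a B \<notin> Ind" and dx: "insert x B \<notin> Ind" and b: "b \<in> B"
  shows "insert x (insert a (B - {b})) \<notin> Ind"
proof
  assume D: "insert x (insert a (B - {b})) \<in> Ind"
  define Z where "Z = insert x (insert a B)"
  have ZE: "Z \<subseteq> E" unfolding Z_def using m_subE[OF M B] ax by blast
  have Bm: "maximal_in (Ind \<inter> Pow Z) B"
    by (rule maxI_loc[OF B _ _ M]) (use da dx Z_def in auto)
  have I0: "insert a (B - {b}) \<in> Ind" using m_sub[OF M D] by blast
  obtain u where u: "u \<in> B - insert a (B - {b})" "insert u (insert a (B - {b})) \<in> Ind"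
    using RI3'[OF M ZE Bm I0 D] ax b Z_def by blast
  have "u = b" using u by blast
  moreover have "insert b (insert a (B - {b})) = insert a B" using b by blast
  ultimately show False using u da by simp
qed

lemma ex_span_sub:
  assumes M: "matroid E Ind" and I: "I \<in> Ind" and a: "a \<in> E" "a \<notin> I" and da: "insert a I \<notin> Ind"
    and b: "b \<in> I" and I': "insert a (I - {b}) \<in> Ind"
  shows "span E Ind I \<subseteq> span E Ind (insert a (I - {b}))"
proof
  fix x assume "x \<in> span E Ind I"
  then have x: "x \<in> E" "x \<in> I \<or> insert x I \<notin> Ind" using S1[OF M I] by auto
  have "x \<in> insert a (I - {b}) \<or> insert x (insert a (I - {b})) \<notin> Ind"
  proof (cases "x = a \<or> x = b \<or> x \<in> I")
    case True
    moreover have "insert b (insert a (I - {b})) = insert a I" using b by blast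
    ultimately show ?thesis using da by auto
  next
    case False
    then have "insert x (insert a (I - {b})) \<notin> Ind"
      using e2[OF M I a(1) x(1) a(2) _ _ da _ b] x by blast
    then show ?thesis by blast
  qed
  then show "x \<in> span E Ind (insert a (I - {b}))" using S1[OF M I'] x by blast
qed

lemma ex_span:
  assumes M: "matroid E Ind" and I: "I \<in> Ind" and a: "a \<in> E" "a \<notin> I" and da: "insert a I \<notin> Ind"
    and b: "b \<in> I" and I': "insert a (I - {b}) \<in> Ind"
  shows "span E Ind (insert a (I - {b})) = span E Ind I"
proof
  show "span E Ind I \<subseteq> span E Ind (insert a (I - {b}))" by (rule ex_span_sub[OF assms])
  have bE: "b \<in> E" using m_subE[OF M I] b by blast
  have e1: "insert b (insert a (I - {b})) = insert a I" using b by blast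
  have e2: "insert b (insert a (I - {b}) - {a}) = I" using a b by blast
  have "span E Ind (insert a (I - {b})) \<subseteq> span E Ind (insert b (insert a (I - {b}) - {a}))"
    by (rule ex_span_sub[OF M I' bE]) (use a b da I e1 e2 in auto)
  then show "span E Ind (insert a (I - {b})) \<subseteq> span E Ind I" using e2 by simp
qed

lemma n3:
  assumes M: "matroid E Ind" and I: "I \<in> Ind" and x: "x \<in> E" "x \<notin> I" and d: "insert x I \<notin> Ind"
    and db: "insert x (I - {b}) \<notin> Ind" and dc: "insert x (I - {c}) \<notin> Ind"
  shows "insert x (I - {b} - {c}) \<notin> Ind"
proof
  assume H: "insert x (I - {b} - {c}) \<in> Ind"
  have C: "circuit E Ind (fc Ind I x)" using T1[OF M I x d] .
  have "fc Ind I x \<subseteq> insert x (I - {b} - {c})" unfolding fc_def using db dc by auto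
  then have "fc Ind I x \<in> Ind" using m_sub[OF M H] by blast
  then show False using C unfolding circuit_def by blast
qed

lemma n2:
  assumes M: "matroid E Ind" and I: "I \<in> Ind" and a: "a \<notin> I" and x: "x \<in> E" "x \<notin> I" "x \<noteq> a"
    and I': "insert a (I - {b}) \<in> Ind" and d: "insert x I \<notin> Ind" and db: "insert x (I - {b}) \<notin> Ind"
    and y: "y \<in> I" "y \<noteq> b" "insert x (I - {y}) \<in> Ind"
  shows "insert x (insert a (I - {b}) - {y}) \<in> Ind"
proof (rule circ_unique[OF M I' _ T1[OF M I x(1) x(2) d]])
  show "x \<notin> insert a (I - {b})" using x by blast
  show "fc Ind I x \<subseteq> insert x (insert a (I - {b}))" unfolding fc_def using db by auto
  show "y \<in> fc Ind I x" unfolding fc_def using y by blast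
  show "y \<noteq> x" using y x by blast
qed

definition pcond :: "'a set set \<Rightarrow> 'a set \<Rightarrow> 'a set \<Rightarrow> nat set \<Rightarrow> (nat \<Rightarrow> 'a) \<Rightarrow> (nat \<Rightarrow> 'a) \<Rightarrow> bool" where
  "pcond Ind E I T xx yy \<longleftrightarrow> I \<in> Ind \<and>
     (\<forall>s\<in>T. xx s \<in> E \<and> xx s \<notin> I \<and> insert (xx s) I \<notin> Ind \<and> yy s \<in> I \<and> insert (xx s) (I - {yy s}) \<in> Ind)
     \<and> inj_on xx T \<and> inj_on yy T \<and> (\<forall>s\<in>T. \<forall>t\<in>T. s < t \<longrightarrow> insert (xx s) (I - {yy t}) \<notin> Ind)"

lemma pml:
  assumes M: "matroid E Ind" and fin: "finite T"
  shows "\<forall>I. pcond Ind E I T xx yy \<longrightarrow>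
     (I - yy ` T) \<union> xx ` T \<in> Ind \<and> span E Ind ((I - yy ` T) \<union> xx ` T) = span E Ind I"
  using fin
proof (induct T rule: finite_linorder_max_induct)
  case empty
  then show ?case unfolding pcond_def by simp
next
  case (insert m A)
  show ?case
  proof (intro allI impI)
    fix I assume pc: "pcond Ind E I (insert m A) xx yy"
    have I: "I \<in> Ind" using pc unfolding pcond_def by blast
    have cnd: "\<And>s. s \<in> insert m A \<Longrightarrow> xx s \<in> E \<and> xx s \<notin> I \<and> insert (xx s) I \<notin> Ind \<and> yy s \<in> I \<and> insert (xx s) (I - {yy s}) \<in> Ind"
      using pc unfolding pcond_def by blast
    have ij: "inj_on xx (insert m A)" "inj_on yy (insert m A)" using pc unfolding pcond_def by auto
    have ord: "\<And>s t. s \<in> insert m A \<Longrightarrow> t \<in> insert m A \<Longrightarrow> s < t \<Longrightarrow> insert (xx s) (I - {yy t}) \<notin> Ind"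
      using pc unfolding pcond_def by blast
    define a where "a = xx m"
    define b where "b = yy m"
    define I1 where "I1 = insert a (I - {b})"
    have am: "a \<in> E" "a \<notin> I" "insert a I \<notin> Ind" "b \<in> I" "I1 \<in> Ind"
      using cnd[of m] unfolding a_def b_def I1_def by auto
    have mA: "m \<notin> A" using insert(2) by blast
    have neqx: "\<And>s. s \<in> A \<Longrightarrow> xx s \<noteq> a" using ij(1) mA unfolding a_def inj_on_def by blast
    have neqy: "\<And>s. s \<in> A \<Longrightarrow> yy s \<noteq> b" using ij(2) mA unfolding b_def inj_on_def by blast
    have pc1: "pcond Ind E I1 A xx yy"
      unfolding pcond_def
    proof (intro conjI ballI impI)
      show "I1 \<in> Ind" by (rule am(5))
      fix s assume sA: "s \<in> A"
      have cs: "xx s \<in> E" "xx s \<notin> I" "insert (xx s) I \<notin> Ind" "yy s \<in> I" "insert (xx s) (I - {yy s}) \<in> Ind"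
        using cnd[of s] sA by auto
      have sm: "s < m" using insert(2) sA by blast
      have db: "insert (xx s) (I - {b}) \<notin> Ind" using ord[of s m] sA sm unfolding b_def by blast
      show "xx s \<in> E" by (rule cs(1))
      show "xx s \<notin> I1" using cs neqx[OF sA] unfolding I1_def by blast
      show "insert (xx s) I1 \<notin> Ind"
      proof
        assume "insert (xx s) I1 \<in> Ind"
        then have "insert (xx s) (I - {b}) \<in> Ind" using m_sub[OF M, of "insert (xx s) I1" "insert (xx s) (I - {b})"] unfolding I1_def by blast
        then show False using db by blast
      qed
      show "yy s \<in> I1" using cs neqy[OF sA] unfolding I1_def by blast
      show "insert (xx s) (I1 - {yy s}) \<in> Ind"
        unfolding I1_def
        by (rule n2[OF M I am(2) cs(1) cs(2) neqx[OF sA] am(5)[unfolded I1_def] cs(3) db cs(4) neqy[OF sA] cs(5)])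
    next
      show "inj_on xx A" using ij(1) by (rule inj_on_subset) blast
      show "inj_on yy A" using ij(2) by (rule inj_on_subset) blast
    next
      fix s t assume st: "s \<in> A" "t \<in> A" "s < t"
      have cs: "xx s \<in> E" "xx s \<notin> I" "insert (xx s) I \<notin> Ind" using cnd[of s] st by auto
      have sm: "s < m" using insert(2) st by blast
      have db: "insert (xx s) (I - {b}) \<notin> Ind" using ord[of s m] st sm unfolding b_def by blast
      have dc: "insert (xx s) (I - {yy t}) \<notin> Ind" using ord[of s t] st by blast
      have n: "insert (xx s) (I - {b} - {yy t}) \<notin> Ind" by (rule n3[OF M I cs db dc])
      show "insert (xx s) (I1 - {yy t}) \<notin> Ind"
      proof
        assume "insert (xx s) (I1 - {yy t}) \<in> Ind"
        then have "insert (xx s) (I - {b} - {yy t}) \<in> Ind"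
          using m_sub[OF M, of "insert (xx s) (I1 - {yy t})" "insert (xx s) (I - {b} - {yy t})"] unfolding I1_def by blast
        then show False using n by blast
      qed
    qed
    have IH: "(I1 - yy ` A) \<union> xx ` A \<in> Ind \<and> span E Ind ((I1 - yy ` A) \<union> xx ` A) = span E Ind I1"
      using insert(3) pc1 by blast
    have yyI: "yy ` A \<subseteq> I" using cnd by blast
    have seq: "(I1 - yy ` A) \<union> xx ` A = (I - yy ` insert m A) \<union> xx ` insert m A"
      unfolding I1_def a_def b_def using yyI am(2) unfolding a_def by auto
    have sp: "span E Ind I1 = span E Ind I" unfolding I1_def
      by (rule ex_span[OF M I am(1) am(2) am(3) am(4) am(5)[unfolded I1_def]])
    show "(I - yy ` insert m A) \<union> xx ` insert m A \<in> Ind \<and>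
          span E Ind ((I - yy ` insert m A) \<union> xx ` insert m A) = span E Ind I"
      using IH seq sp by simp
  qed
qed

lemma cl:
  assumes M: "matroid E Ind" and A: "A \<in> Ind"
  shows "\<forall>B. B \<in> Ind \<longrightarrow> A \<subseteq> span E Ind B \<longrightarrow> finite (A - B) \<longrightarrow> finite (B - A) \<longrightarrow>
     card (B - A) = n \<longrightarrow> card (A - B) \<le> n"
proof (induct n)
  case 0
  show ?case
  proof (intro allI impI)
    fix B assume B: "B \<in> Ind" "A \<subseteq> span E Ind B" "finite (A - B)" "finite (B - A)" "card (B - A) = 0"
    have BA: "B \<subseteq> A" using B(4,5) by auto
    have "A - B = {}"
    proof (rule ccontr)
      assume "A - B \<noteq> {}"
      then obtain a where a: "a \<in> A" "a \<notin> B" by blast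
      have "insert a B \<notin> Ind" using B(2) a S1[OF M B(1), of a] by blast
      moreover have "insert a B \<in> Ind" using m_sub[OF M A, of "insert a B"] a BA by blast
      ultimately show False by blast
    qed
    then show "card (A - B) \<le> 0" by (metis card.empty order_refl)
  qed
next
  case (Suc n)
  show ?case
  proof (intro allI impI)
    fix B assume B: "B \<in> Ind" "A \<subseteq> span E Ind B" "finite (A - B)" "finite (B - A)" "card (B - A) = Suc n"
    have "B - A \<noteq> {}" using B(5) by force
    then obtain b where b: "b \<in> B" "b \<notin> A" by blast
    have "B - {b} - A = (B - A) - {b}" by blast
    moreover have "card ((B - A) - {b}) = n" using card_Diff_singleton[of b "B - A"] b B(5) by simp
    ultimately have cB: "card (B - {b} - A) = n" by simp
    have f2: "finite (B - {b} - A)" using B(4) by (rule finite_subset[rotated]) blast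
    have Bb: "B - {b} \<in> Ind" using m_sub[OF M B(1), of "B - {b}"] by blast
    show "card (A - B) \<le> Suc n"
    proof (cases "A \<subseteq> span E Ind (B - {b})")
      case True
      have eq: "A - (B - {b}) = A - B" using b by blast
      have f1: "finite (A - (B - {b}))" using eq B(3) by simp
      have "card (A - (B - {b})) \<le> n"
        using Suc[rule_format, OF Bb True f1 f2 cB] .
      then show ?thesis using eq by simp
    next
      case False
      then obtain a where a: "a \<in> A" "a \<notin> span E Ind (B - {b})" by blast
      have aE: "a \<in> E" using a(1) B(2) unfolding span_def by blast
      have a1: "a \<notin> B - {b}" "insert a (B - {b}) \<in> Ind" using a(2) S1[OF M Bb, of a] aE by auto
      have ab: "a \<noteq> b" using a b by blast
      have aB: "a \<notin> B" using a1 ab by blast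
      have daB: "insert a B \<notin> Ind" using B(2) a(1) aB S1[OF M B(1), of a] by blast
      have sp: "span E Ind B \<subseteq> span E Ind (insert a (B - {b}))"
        by (rule ex_span_sub[OF M B(1) aE aB daB b(1) a1(2)])
      have A2: "A \<subseteq> span E Ind (insert a (B - {b}))" using B(2) sp by blast
      have e1: "insert a (B - {b}) - A = B - A - {b}" using a b by blast
      have e2: "A - insert a (B - {b}) = A - B - {a}" using a b by blast
      have f1: "finite (A - insert a (B - {b}))" using e2 B(3) by simp
      have f3: "finite (insert a (B - {b}) - A)" using e1 B(4) by simp
      have c3: "card (insert a (B - {b}) - A) = n" using e1 cB by (metis Diff_insert2 Diff_insert)
      have "card (A - insert a (B - {b})) \<le> n"
        using Suc[rule_format, OF a1(2) A2 f1 f3 c3] .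
      moreover have "card (A - B - {a}) = card (A - B) - 1" using a(1) aB B(3) by simp
      moreover have "card (A - B) \<ge> 1"
      proof -
        have "A - B \<noteq> {}" using a(1) aB by blast
        then have "card (A - B) \<noteq> 0" using B(3) by simp
        then show ?thesis by simp
      qed
      ultimately show ?thesis using e2 by simp
    qed
  qed
qed

lemma dir1:
  fixes E :: "'a set" and K :: "'k set"
    and M :: "'k \<Rightarrow> 'a set set" and I :: "'k \<Rightarrow> 'a set" and e :: 'a
  assumes matroids: "\<forall>i\<in>K. matroid E (M i)"
    and indep: "\<forall>i\<in>K. I i \<in> M i"
    and disj: "\<forall>i\<in>K. \<forall>j\<in>K. i \<noteq> j \<longrightarrow> I i \<inter> I j = {}"
    and e: "e \<in> E - (\<Union>i\<in>K. I i)"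
    and Jind: "\<forall>i\<in>K. J i \<in> M i"
    and Jdisj: "\<forall>i\<in>K. \<forall>j\<in>K. i \<noteq> j \<longrightarrow> J i \<inter> J j = {}"
    and Jun: "(\<Union>i\<in>K. J i) = (\<Union>i\<in>K. I i) \<union> {e}"
    and fin1: "finite {i\<in>K. I i \<noteq> J i}"
    and fin2: "\<forall>i\<in>K. finite ((I i - J i) \<union> (J i - I i))"
    and X: "X \<subseteq> (\<Union>i\<in>K. I i)"
    and Xsp: "\<forall>i\<in>K. X \<union> {e} \<subseteq> span E (M i) (I i \<inter> X)"
  shows False
proof -
  define Y where "Y = X \<union> {e}"
  define A where "A i = J i \<inter> Y" for i
  define B where "B i = I i \<inter> X" for i
  define S where "S = {i\<in>K. I i \<noteq> J i}"
  have eU: "\<And>i. i \<in> K \<Longrightarrow> e \<notin> I i" using e by blast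
  have finAB: "finite (A i - B i)" if i: "i \<in> K" for i
  proof -
    have "A i - B i \<subseteq> ((I i - J i) \<union> (J i - I i)) \<union> {e}" unfolding A_def B_def Y_def by blast
    moreover have "finite (((I i - J i) \<union> (J i - I i)) \<union> {e})" using fin2 i by simp
    ultimately show ?thesis by (rule finite_subset)
  qed
  have finBA: "finite (B i - A i)" if i: "i \<in> K" for i
  proof -
    have "B i - A i \<subseteq> ((I i - J i) \<union> (J i - I i))" unfolding A_def B_def Y_def by blast
    then show ?thesis using fin2 i by (meson finite_subset)
  qed
  have cardle: "card (A i - B i) \<le> card (B i - A i)" if i: "i \<in> K" for i
  proof -
    have Mi: "matroid E (M i)" using matroids i by blast
    have Ai: "A i \<in> M i" using m_sub[OF Mi, of "J i" "A i"] Jind i unfolding A_def by blast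
    have Bi: "B i \<in> M i" using m_sub[OF Mi, of "I i" "B i"] indep i unfolding B_def by blast
    have sub: "A i \<subseteq> span E (M i) (B i)" using Xsp i unfolding A_def B_def Y_def by blast
    show ?thesis using cl[OF Mi Ai, rule_format, OF Bi sub finAB[OF i] finBA[OF i] refl] .
  qed
  define P where "P = Sigma S (\<lambda>i. A i - B i)"
  define Q where "Q = Sigma S (\<lambda>i. B i - A i)"
  have finS: "finite S" using fin1 unfolding S_def .
  have SK: "S \<subseteq> K" unfolding S_def by blast
  have finP: "finite P" unfolding P_def using finS finAB SK by blast
  have finQ: "finite Q" unfolding Q_def using finS finBA SK by blast
  have cP: "card P = (\<Sum>i\<in>S. card (A i - B i))" unfolding P_def
    by (rule card_SigmaI[OF finS]) (use finAB SK in blast)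
  have cQ: "card Q = (\<Sum>i\<in>S. card (B i - A i))" unfolding Q_def
    by (rule card_SigmaI[OF finS]) (use finBA SK in blast)
  have le: "card P \<le> card Q" unfolding cP cQ by (rule sum_mono) (use cardle SK in blast)
  have injQ: "inj_on snd Q"
  proof (rule inj_onI)
    fix p q assume pq: "p \<in> Q" "q \<in> Q" "snd p = snd q"
    obtain i u where p: "p = (i, u)" "i \<in> S" "u \<in> B i" using pq(1) unfolding Q_def by blast
    obtain j w where q: "q = (j, w)" "j \<in> S" "w \<in> B j" using pq(2) unfolding Q_def by blast
    have "u = w" using pq(3) p q by simp
    then have "i = j" using disj p q SK unfolding B_def by blast
    then show "p = q" using p q \<open>u = w\<close> by simp
  qed
  have subQP: "snd ` Q \<subseteq> snd ` P - {e}"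
  proof
    fix u assume "u \<in> snd ` Q"
    then obtain i where iu: "i \<in> S" "u \<in> B i" "u \<notin> A i" unfolding Q_def by force
    have iK: "i \<in> K" using iu SK by blast
    have uX: "u \<in> X" "u \<in> I i" using iu unfolding B_def by auto
    have uJ: "u \<notin> J i" using iu uX unfolding A_def Y_def by blast
    have "u \<in> (\<Union>i\<in>K. J i)" using Jun uX iK by blast
    then obtain j where j: "j \<in> K" "u \<in> J j" by blast
    have ji: "j \<noteq> i" using j uJ by blast
    have uIj: "u \<notin> I j" using disj iK j ji uX by blast
    have jS: "j \<in> S" unfolding S_def using j uIj by blast
    have "(j, u) \<in> P" unfolding P_def A_def B_def Y_def using jS j uX uIj by blast
    moreover have "u \<noteq> e" using uX eU iK by blast
    ultimately show "u \<in> snd ` P - {e}" by force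
  qed
  have eP: "e \<in> snd ` P"
  proof -
    have "e \<in> (\<Union>i\<in>K. J i)" using Jun by blast
    then obtain j where j: "j \<in> K" "e \<in> J j" by blast
    have jS: "j \<in> S" unfolding S_def using j eU by blast
    have "(j, e) \<in> P" unfolding P_def A_def B_def Y_def using jS j eU by blast
    then show ?thesis by force
  qed
  have "card Q = card (snd ` Q)" using card_image[OF injQ] by simp
  also have "\<dots> \<le> card (snd ` P - {e})" by (rule card_mono) (use finP subQP in auto)
  also have "\<dots> = card (snd ` P) - 1" using eP finP by simp
  also have "\<dots> < card (snd ` P)"
  proof -
    have "card (snd ` P) \<noteq> 0" using eP finP by auto
    then show ?thesis by simp
  qed
  also have "\<dots> \<le> card P" using card_image_le[OF finP] .
  finally show False using le by simp
qed

definition stp :: "'a set \<Rightarrow> ('k \<Rightarrow> 'a set set) \<Rightarrow> ('k \<Rightarrow> 'a set) \<Rightarrow> 'k set \<Rightarrow> 'k \<Rightarrow> 'a \<Rightarrow> 'a \<Rightarrow> bool" where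
  "stp E M I K i y w \<longleftrightarrow> i \<in> K \<and> y \<in> E \<and> y \<notin> I i \<and> insert y (I i) \<notin> M i \<and> w \<in> I i \<and> insert y (I i - {w}) \<in> M i"

definition ispath :: "'a set \<Rightarrow> ('k \<Rightarrow> 'a set set) \<Rightarrow> ('k \<Rightarrow> 'a set) \<Rightarrow> 'k set \<Rightarrow> 'a \<Rightarrow> nat \<Rightarrow> (nat \<Rightarrow> 'a) \<Rightarrow> (nat \<Rightarrow> 'k) \<Rightarrow> bool" where
  "ispath E M I K e n z ix \<longleftrightarrow> z 0 = e \<and> (\<forall>s<n. stp E M I K (ix s) (z s) (z (Suc s)))"

definition isfree :: "('k \<Rightarrow> 'a set set) \<Rightarrow> ('k \<Rightarrow> 'a set) \<Rightarrow> 'k set \<Rightarrow> 'a \<Rightarrow> 'k \<Rightarrow> bool" where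
  "isfree M I K y k \<longleftrightarrow> k \<in> K \<and> y \<notin> I k \<and> insert y (I k) \<in> M k"

lemma path_prefix: "ispath E M I K e n z ix \<Longrightarrow> m \<le> n \<Longrightarrow> ispath E M I K e m z ix"
  unfolding ispath_def by auto

lemma path_ext:
  assumes "ispath E M I K e n z ix" "stp E M I K i (z n) w"
  shows "ispath E M I K e (Suc n) (z(Suc n := w)) (ix(n := i))"
  unfolding ispath_def
proof (intro conjI allI impI)
  show "(z(Suc n := w)) 0 = e" using assms(1) unfolding ispath_def by simp
  fix s assume s: "s < Suc n"
  show "stp E M I K ((ix(n := i)) s) ((z(Suc n := w)) s) ((z(Suc n := w)) (Suc s))"
  proof (cases "s = n")
    case True then show ?thesis using assms(2) by simp
  next
    case False
    then have "s < n" using s by simp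
    then show ?thesis using assms(1) False unfolding ispath_def by simp
  qed
qed

lemma shortcut:
  assumes p: "ispath E M I K e n z ix" and sd: "s + 1 + d \<le> n"
    and st: "stp E M I K i0 (z s) (z (s + 1 + d))"
  shows "ispath E M I K e (n - d) (\<lambda>r. if r \<le> s then z r else z (r + d))
           (\<lambda>r. if r < s then ix r else if r = s then i0 else ix (r + d))"
    and "(\<lambda>r. if r \<le> s then z r else z (r + d)) (n - d) = z n"
proof -
  have h1: "\<not> (n - d \<le> s)" using sd by arith
  have h2: "n - d + d = n" using sd by arith
  show "(\<lambda>r. if r \<le> s then z r else z (r + d)) (n - d) = z n" using h1 h2 by simp
  show "ispath E M I K e (n - d) (\<lambda>r. if r \<le> s then z r else z (r + d))
           (\<lambda>r. if r < s then ix r else if r = s then i0 else ix (r + d))"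
    unfolding ispath_def
  proof (intro conjI allI impI)
    show "(if 0 \<le> s then z 0 else z (0 + d)) = e" using p unfolding ispath_def by simp
    fix r assume r: "r < n - d"
    have pp: "\<And>q. q < n \<Longrightarrow> stp E M I K (ix q) (z q) (z (Suc q))" using p unfolding ispath_def by blast
    consider "r < s" | "r = s" | "s < r" by linarith
    then show "stp E M I K (if r < s then ix r else if r = s then i0 else ix (r + d))
        (if r \<le> s then z r else z (r + d)) (if Suc r \<le> s then z (Suc r) else z (Suc r + d))"
    proof cases
      case 1 then show ?thesis using pp[of r] sd by simp
    next
      case 2 then show ?thesis using st by simp
    next
      case 3 then show ?thesis using pp[of "r + d"] r by simp
    qed
  qed
qed

lemma dir2:
  fixes E :: "'a set" and K :: "'k set"
    and M :: "'k \<Rightarrow> 'a set set" and I :: "'k \<Rightarrow> 'a set" and e :: 'a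
  assumes matroids: "\<forall>i\<in>K. matroid E (M i)"
    and indep: "\<forall>i\<in>K. I i \<in> M i"
    and disj: "\<forall>i\<in>K. \<forall>j\<in>K. i \<noteq> j \<longrightarrow> I i \<inter> I j = {}"
    and e: "e \<in> E - (\<Union>i\<in>K. I i)"
    and notP2: "\<not> (\<exists>X. X \<subseteq> (\<Union>i\<in>K. I i) \<and>
            (\<forall>i\<in>K. X \<union> {e} \<subseteq> span E (M i) (I i \<inter> X)))"
  shows "\<exists>J :: 'k \<Rightarrow> 'a set. \<exists>k\<in>K.
            (\<forall>i\<in>K. J i \<in> M i) \<and>
            (\<forall>i\<in>K. \<forall>j\<in>K. i \<noteq> j \<longrightarrow> J i \<inter> J j = {}) \<and>
            (\<Union>i\<in>K. J i) = (\<Union>i\<in>K. I i) \<union> {e} \<and>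
            (finite {i\<in>K. I i \<noteq> J i} \<and> (\<forall>i\<in>K. finite ((I i - J i) \<union> (J i - I i)))) \<and>
            (\<forall>i\<in>K. i \<noteq> k \<longrightarrow> span E (M i) (J i) = span E (M i) (I i)) \<and>
            (\<exists>f\<in>J k. span E (M k) (J k - {f}) = span E (M k) (I k))"
proof -
  have eE: "e \<in> E" and eU: "\<And>i. i \<in> K \<Longrightarrow> e \<notin> I i" using e by auto
  have IE: "\<And>i. i \<in> K \<Longrightarrow> I i \<subseteq> E" using matroids indep m_subE by blast
  define R where "R = {y. \<exists>n z ix. ispath E M I K e n z ix \<and> z n = y}"
  have eR: "e \<in> R"
  proof -
    have "ispath E M I K e 0 (\<lambda>_. e) (\<lambda>_. undefined)" unfolding ispath_def by simp
    then show ?thesis unfolding R_def by blast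
  qed
  have RE: "y \<in> E \<and> (y = e \<or> y \<in> (\<Union>i\<in>K. I i))" if y: "y \<in> R" for y
  proof -
    obtain n z ix where p: "ispath E M I K e n z ix" "z n = y" using y unfolding R_def by blast
    show ?thesis
    proof (cases n)
      case 0 then show ?thesis using p eE unfolding ispath_def by auto
    next
      case (Suc m)
      then have "stp E M I K (ix m) (z m) (z (Suc m))" using p unfolding ispath_def by blast
      then have "ix m \<in> K" "y \<in> I (ix m)" using p Suc unfolding stp_def by auto
      then show ?thesis using IE by blast
    qed
  qed
  have Rstep: "w \<in> R" if y: "y \<in> R" and st: "stp E M I K i y w" for y i w
  proof -
    obtain n z ix where p: "ispath E M I K e n z ix" "z n = y" using y unfolding R_def by blast
    have "ispath E M I K e (Suc n) (z(Suc n := w)) (ix(n := i))" using path_ext[OF p(1)] st p(2) by blast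
    then show ?thesis unfolding R_def by force
  qed
  have "\<exists>y\<in>R. \<exists>k. isfree M I K y k"
  proof (rule ccontr)
    assume nf: "\<not> (\<exists>y\<in>R. \<exists>k. isfree M I K y k)"
    define X where "X = R - {e}"
    have XU: "X \<subseteq> (\<Union>i\<in>K. I i)" using RE unfolding X_def by blast
    have XR: "X \<union> {e} = R" using eR unfolding X_def by blast
    have "\<forall>i\<in>K. X \<union> {e} \<subseteq> span E (M i) (I i \<inter> X)"
    proof (intro ballI subsetI)
      fix i y assume i: "i \<in> K" and yX: "y \<in> X \<union> {e}"
      have yR: "y \<in> R" using yX XR by blast
      have yE: "y \<in> E" using RE[OF yR] by blast
      show "y \<in> span E (M i) (I i \<inter> X)"
      proof (cases "y \<in> I i")
        case True
        then have "y \<noteq> e" using eU i by blast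
        then have "y \<in> I i \<inter> X" using True yR unfolding X_def by blast
        then show ?thesis using yE unfolding span_def spans_elem_def by blast
      next
        case False
        have Mi: "matroid E (M i)" using matroids i by blast
        have Ii: "I i \<in> M i" using indep i by blast
        have dep: "insert y (I i) \<notin> M i" using nf yR i False unfolding isfree_def by blast
        have C: "circuit E (M i) (fc (M i) (I i) y)" using T1[OF Mi Ii yE False dep] .
        have yC: "y \<in> fc (M i) (I i) y" unfolding fc_def by blast
        have "fc (M i) (I i) y - {y} \<subseteq> I i \<inter> X"
        proof
          fix w assume w: "w \<in> fc (M i) (I i) y - {y}"
          then have w1: "w \<in> I i" "insert y (I i - {w}) \<in> M i" unfolding fc_def by auto
          have "stp E M I K i y w" unfolding stp_def using i yE False dep w1 by blast
          then have "w \<in> R" using Rstep[OF yR] by blast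
          moreover have "w \<noteq> e" using w1 eU i by blast
          ultimately show "w \<in> I i \<inter> X" using w1 unfolding X_def by blast
        qed
        then show ?thesis using yE C yC unfolding span_def spans_elem_def by blast
      qed
    qed
    then show False using notP2 XU by blast
  qed
  then obtain n1 z1 ix1 k1 where p1: "ispath E M I K e n1 z1 ix1" "isfree M I K (z1 n1) k1"
    unfolding R_def by blast
  define Pth where "Pth m \<longleftrightarrow> (\<exists>z ix k. ispath E M I K e m z ix \<and> isfree M I K (z m) k)" for m
  have "Pth n1" unfolding Pth_def using p1 by blast
  define n where "n = (LEAST m. Pth m)"
  have "Pth n" unfolding n_def by (rule LeastI[of Pth n1]) (rule \<open>Pth n1\<close>)
  then obtain z ix k where p: "ispath E M I K e n z ix" and fr: "isfree M I K (z n) k"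
    unfolding Pth_def by blast
  have minl: "\<And>m. m < n \<Longrightarrow> \<not> Pth m" unfolding n_def by (rule not_less_Least)
  have stps: "\<And>s. s < n \<Longrightarrow> stp E M I K (ix s) (z s) (z (Suc s))" using p unfolding ispath_def by blast
  have z0: "z 0 = e" using p unfolding ispath_def by blast
  have kK: "k \<in> K" and zn: "z n \<notin> I k" "insert (z n) (I k) \<in> M k" using fr unfolding isfree_def by auto
  have noshort: "\<not> stp E M I K i0 (z s) (z (s + 1 + d))" if sd: "s + 1 + d \<le> n" "0 < d" for s d i0
  proof
    assume st: "stp E M I K i0 (z s) (z (s + 1 + d))"
    note sc = shortcut[OF p sd(1) st]
    define z' where "z' = (\<lambda>r. if r \<le> s then z r else z (r + d))"
    define ix' where "ix' = (\<lambda>r. if r < s then ix r else if r = s then i0 else ix (r + d))"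
    have q1: "ispath E M I K e (n - d) z' ix'" using sc(1) unfolding z'_def ix'_def .
    have q2: "z' (n - d) = z n" using sc(2) unfolding z'_def .
    have "Pth (n - d)" unfolding Pth_def using q1 q2 fr by metis
    moreover have "n - d < n" using sd by arith
    ultimately show False using minl by blast
  qed
  have dist: "z s \<noteq> z t" if st: "s < t" "t \<le> n" for s t
  proof
    assume eq: "z s = z t"
    show False
    proof (cases "t = n")
      case True
      have "ispath E M I K e s z ix" using path_prefix[OF p, of s] st by simp
      moreover have "isfree M I K (z s) k" using fr eq True by simp
      ultimately have "Pth s" unfolding Pth_def by blast
      then show False using minl st by auto
    next
      case False
      then have tn: "t < n" using st by simp
      have eqt: "s + 1 + (t - s) = Suc t" using st by simp
      have "stp E M I K (ix t) (z s) (z (s + 1 + (t - s)))"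
        using stps[OF tn] eq unfolding eqt by simp
      moreover have "s + 1 + (t - s) \<le> n" "0 < t - s" using st tn by auto
      ultimately show False using noshort by blast
    qed
  qed
  have distn: "s = t" if "s \<le> n" "t \<le> n" "z s = z t" for s t
    using dist[of s t] dist[of t s] that by (cases "s < t"; cases "t < s") auto
  have ixK: "ix s \<in> K" if "s < n" for s using stps[OF that] unfolding stp_def by blast
  have inI: "z (Suc s) \<in> I i \<longleftrightarrow> ix s = i" if s: "s < n" and i: "i \<in> K" for s i
  proof
    have a: "z (Suc s) \<in> I (ix s)" using stps[OF s] unfolding stp_def by blast
    show "ix s = i" if "z (Suc s) \<in> I i" using a that disj ixK[OF s] i by blast
    show "z (Suc s) \<in> I i" if "ix s = i" using a that by blast
  qed
  have zE: "z s \<in> E" if "s \<le> n" for s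
  proof (cases s)
    case 0 then show ?thesis using z0 eE by simp
  next
    case (Suc s')
    then have "s' < n" using that by simp
    then show ?thesis using stps[of s'] Suc IE unfolding stp_def by blast
  qed
  have zU: "z s = e \<or> (\<exists>i\<in>K. z s \<in> I i)" if "s \<le> n" for s
  proof (cases s)
    case 0 then show ?thesis using z0 by simp
  next
    case (Suc s')
    then have "s' < n" using that by simp
    then show ?thesis using stps[of s'] Suc unfolding stp_def by blast
  qed
  define ow where "ow s = (if s < n then ix s else k)" for s
  have owK: "ow s \<in> K" if "s \<le> n" for s using ixK kK that unfolding ow_def by auto
  define Pts where "Pts = z ` {..n}"
  have finPts: "finite Pts" unfolding Pts_def by simp
  have zPts: "z s \<in> Pts" if "s \<le> n" for s unfolding Pts_def using that by simp
  define T where "T i = {s. s < n \<and> ix s = i}" for i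
  define yy where "yy s = z (Suc s)" for s
  define J where "J i = (I i - Pts) \<union> z ` {s. s \<le> n \<and> ow s = i}" for i
  define J' where "J' i = (I i - yy ` T i) \<union> z ` T i" for i
  have IP: "I i - Pts = I i - yy ` T i" if i: "i \<in> K" for i
  proof
    have "yy ` T i \<subseteq> Pts"
    proof
      fix u assume "u \<in> yy ` T i"
      then obtain s where "s < n" "u = z (Suc s)" unfolding yy_def T_def by blast
      then show "u \<in> Pts" using zPts[of "Suc s"] by simp
    qed
    then show "I i - Pts \<subseteq> I i - yy ` T i" by blast
    show "I i - yy ` T i \<subseteq> I i - Pts"
    proof
      fix u assume u: "u \<in> I i - yy ` T i"
      show "u \<in> I i - Pts"
      proof (rule ccontr)
        assume "u \<notin> I i - Pts"
        then obtain s where s: "s \<le> n" "u = z s" using u unfolding Pts_def by blast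
        show False
        proof (cases s)
          case 0 then show False using s u z0 eU i by auto
        next
          case (Suc s')
          then have s'n: "s' < n" using s by simp
          have "ix s' = i" using inI[OF s'n i] u s Suc by simp
          then have "u \<in> yy ` T i" unfolding yy_def T_def using s Suc s'n by blast
          then show False using u by blast
        qed
      qed
    qed
  qed
  have owT: "{s. s \<le> n \<and> ow s = i} = T i \<union> (if i = k then {n} else {})" for i
    unfolding ow_def T_def by auto
  have JJ': "J i = J' i \<union> (if i = k then {z n} else {})" if i: "i \<in> K" for i
    unfolding J_def J'_def IP[OF i] owT by auto
  have pmlres: "J' i \<in> M i \<and> span E (M i) (J' i) = span E (M i) (I i)" if i: "i \<in> K" for i
  proof -
    have Mi: "matroid E (M i)" using matroids i by blast
    have finT: "finite (T i)" unfolding T_def by simp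
    have pc: "pcond (M i) E (I i) (T i) z yy"
      unfolding pcond_def
    proof (intro conjI ballI impI)
      show "I i \<in> M i" using indep i by blast
    next
      fix s assume s: "s \<in> T i"
      have sn: "s < n" "ix s = i" using s unfolding T_def by auto
      have st: "stp E M I K i (z s) (z (Suc s))" using stps[OF sn(1)] sn(2) by simp
      show "z s \<in> E" "z s \<notin> I i" "insert (z s) (I i) \<notin> M i" "yy s \<in> I i" "insert (z s) (I i - {yy s}) \<in> M i"
        using st unfolding stp_def yy_def by auto
    next
      show "inj_on z (T i)"
      proof (rule inj_onI)
        fix s t assume "s \<in> T i" "t \<in> T i" "z s = z t"
        then show "s = t" using distn[of s t] unfolding T_def by auto
      qed
      show "inj_on yy (T i)"
      proof (rule inj_onI)
        fix s t assume "s \<in> T i" "t \<in> T i" "yy s = yy t"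
        then show "s = t" using distn[of "Suc s" "Suc t"] unfolding T_def yy_def by auto
      qed
    next
      fix s t assume st: "s \<in> T i" "t \<in> T i" "s < t"
      show "insert (z s) (I i - {yy t}) \<notin> M i"
      proof
        assume H: "insert (z s) (I i - {yy t}) \<in> M i"
        have sn: "s < n" "ix s = i" "t < n" "ix t = i" using st unfolding T_def by auto
        have a1: "stp E M I K i (z s) (z (Suc s))" using stps[OF sn(1)] sn(2) by simp
        have a2: "stp E M I K i (z t) (z (Suc t))" using stps[OF sn(3)] sn(4) by simp
        have eqt: "s + 1 + (t - s) = Suc t" using st by simp
        have "stp E M I K i (z s) (z (Suc t))" using a1 a2 H unfolding stp_def yy_def by blast
        then have "stp E M I K i (z s) (z (s + 1 + (t - s)))" unfolding eqt .
        moreover have "s + 1 + (t - s) \<le> n" "0 < t - s" using st sn by auto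
        ultimately show False using noshort by blast
      qed
    qed
    show ?thesis using pml[OF Mi finT, rule_format, OF pc] unfolding J'_def .
  qed
  have Mk: "matroid E (M k)" using matroids kK by blast
  have Ik: "I k \<in> M k" using indep kK by blast
  have znE: "z n \<in> E" using zE by simp
  have znsp: "z n \<notin> span E (M k) (I k)" using S1[OF Mk Ik, of "z n"] zn by blast
  have J'k: "J' k \<in> M k" "span E (M k) (J' k) = span E (M k) (I k)" using pmlres[OF kK] by auto
  have znJ': "z n \<notin> J' k" "insert (z n) (J' k) \<in> M k"
    using S1[OF Mk J'k(1), of "z n"] znsp znE J'k(2) by auto
  have Jk: "J k = insert (z n) (J' k)" using JJ'[OF kK] by simp
  have Jne: "J i = J' i" if "i \<in> K" "i \<noteq> k" for i using JJ'[OF that(1)] that(2) by simp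
  have Jmem: "u \<in> J i \<longleftrightarrow> (u \<in> I i \<and> u \<notin> Pts) \<or> (\<exists>s. s \<le> n \<and> ow s = i \<and> u = z s)" for u i
    unfolding J_def by blast
  show ?thesis
  proof (intro exI[of _ J] bexI[of _ k] conjI)
    show "k \<in> K" by (rule kK)
    show "\<forall>i\<in>K. J i \<in> M i"
    proof
      fix i assume i: "i \<in> K"
      show "J i \<in> M i"
      proof (cases "i = k")
        case True then show ?thesis using Jk znJ' by simp
      next
        case False then show ?thesis using Jne[OF i False] pmlres[OF i] by simp
      qed
    qed
    show "\<forall>i\<in>K. \<forall>j\<in>K. i \<noteq> j \<longrightarrow> J i \<inter> J j = {}"
    proof (intro ballI impI)
      fix i j assume ij: "i \<in> K" "j \<in> K" "i \<noteq> j"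
      show "J i \<inter> J j = {}"
      proof (rule ccontr)
        assume "J i \<inter> J j \<noteq> {}"
        then obtain u where u: "u \<in> J i" "u \<in> J j" by blast
        show False
        proof (cases "u \<in> Pts")
          case False
          then have "u \<in> I i" "u \<in> I j" using u Jmem zPts by blast+
          then show False using disj ij by blast
        next
          case True
          obtain s where s: "s \<le> n" "ow s = i" "u = z s" using u(1) True Jmem by blast
          obtain t where t: "t \<le> n" "ow t = j" "u = z t" using u(2) True Jmem by blast
          have "s = t" using distn[of s t] s t by simp
          then show False using s t ij by simp
        qed
      qed
    qed
    show "(\<Union>i\<in>K. J i) = (\<Union>i\<in>K. I i) \<union> {e}"
    proof
      show "(\<Union>i\<in>K. J i) \<subseteq> (\<Union>i\<in>K. I i) \<union> {e}"
      proof
        fix u assume "u \<in> (\<Union>i\<in>K. J i)"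
        then obtain i where i: "i \<in> K" "u \<in> J i" by blast
        show "u \<in> (\<Union>i\<in>K. I i) \<union> {e}"
        proof (cases "u \<in> I i")
          case True then show ?thesis using i by blast
        next
          case False
          then obtain s where "s \<le> n" "u = z s" using i Jmem by blast
          then show ?thesis using zU by blast
        qed
      qed
      show "(\<Union>i\<in>K. I i) \<union> {e} \<subseteq> (\<Union>i\<in>K. J i)"
      proof
        fix u assume u: "u \<in> (\<Union>i\<in>K. I i) \<union> {e}"
        show "u \<in> (\<Union>i\<in>K. J i)"
        proof (cases "u \<in> Pts")
          case True
          then obtain s where s: "s \<le> n" "u = z s" unfolding Pts_def by blast
          then have "u \<in> J (ow s)" using Jmem by blast
          then show ?thesis using owK[OF s(1)] by blast
        next
          case False
          then have "u \<noteq> e" using zPts[of 0] z0 by auto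
          then obtain i where "i \<in> K" "u \<in> I i" using u by blast
          then show ?thesis using False Jmem by blast
        qed
      qed
    qed
    have JIP: "J i \<subseteq> I i \<union> Pts" "I i - Pts \<subseteq> J i" for i using Jmem zPts by blast+
    show "finite {i \<in> K. I i \<noteq> J i}"
    proof (rule finite_subset)
      show "finite (ow ` {..n})" by simp
      show "{i \<in> K. I i \<noteq> J i} \<subseteq> ow ` {..n}"
      proof
        fix i assume i: "i \<in> {i \<in> K. I i \<noteq> J i}"
        show "i \<in> ow ` {..n}"
        proof (rule ccontr)
          assume nio: "i \<notin> ow ` {..n}"
          have "I i \<inter> Pts = {}"
          proof (rule ccontr)
            assume "I i \<inter> Pts \<noteq> {}"
            then obtain s where s: "s \<le> n" "z s \<in> I i" unfolding Pts_def by blast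
            show False
            proof (cases s)
              case 0 then show False using s z0 eU i by auto
            next
              case (Suc s')
              then have s'n: "s' < n" using s by simp
              then have "ix s' = i" using inI[OF s'n] s Suc i by auto
              then have "ow s' = i" unfolding ow_def using s'n by simp
              then show False using nio s'n by force
            qed
          qed
          moreover have "{s. s \<le> n \<and> ow s = i} = {}" using nio by force
          ultimately have "J i = I i" unfolding J_def by blast
          then show False using i by simp
        qed
      qed
    qed
    show "\<forall>i\<in>K. finite ((I i - J i) \<union> (J i - I i))"
    proof
      fix i assume "i \<in> K"
      have "(I i - J i) \<union> (J i - I i) \<subseteq> Pts" using JIP[of i] by blast
      then show "finite ((I i - J i) \<union> (J i - I i))" using finPts by (rule finite_subset)
    qed
    show "\<forall>i\<in>K. i \<noteq> k \<longrightarrow> span E (M i) (J i) = span E (M i) (I i)"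
      using Jne pmlres by simp
    show "\<exists>f\<in>J k. span E (M k) (J k - {f}) = span E (M k) (I k)"
    proof
      show "z n \<in> J k" using Jk by simp
      have "J k - {z n} = J' k" using Jk znJ'(1) by auto
      then show "span E (M k) (J k - {z n}) = span E (M k) (I k)" using J'k(2) by simp
    qed
  qed
qed


theorem lemma3p1:
  fixes E :: "'a set" and K :: "'k set"
    and M :: "'k \<Rightarrow> 'a set set" and I :: "'k \<Rightarrow> 'a set" and e :: 'a
  assumes matroids: "\<forall>i\<in>K. matroid E (M i)"
    and indep: "\<forall>i\<in>K. I i \<in> M i"
    and disj: "\<forall>i\<in>K. \<forall>j\<in>K. i \<noteq> j \<longrightarrow> I i \<inter> I j = {}"
    and e: "e \<in> E - (\<Union>i\<in>K. I i)"
  shows "(\<exists>J :: 'k \<Rightarrow> 'a set. \<exists>k\<in>K.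
            (\<forall>i\<in>K. J i \<in> M i) \<and>
            (\<forall>i\<in>K. \<forall>j\<in>K. i \<noteq> j \<longrightarrow> J i \<inter> J j = {}) \<and>
            (\<Union>i\<in>K. J i) = (\<Union>i\<in>K. I i) \<union> {e} \<and>
            (finite {i\<in>K. I i \<noteq> J i} \<and> (\<forall>i\<in>K. finite ((I i - J i) \<union> (J i - I i)))) \<and>
            (\<forall>i\<in>K. i \<noteq> k \<longrightarrow> span E (M i) (J i) = span E (M i) (I i)) \<and>
            (\<exists>f\<in>J k. span E (M k) (J k - {f}) = span E (M k) (I k)))
       \<noteq>
         (\<exists>X. X \<subseteq> (\<Union>i\<in>K. I i) \<and>
            (\<forall>i\<in>K. X \<union> {e} \<subseteq> span E (M i) (I i \<inter> X)))"
proof (cases "\<exists>X. X \<subseteq> (\<Union>i\<in>K. I i) \<and> (\<forall>i\<in>K. X \<union> {e} \<subseteq> span E (M i) (I i \<inter> X))")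
  case True
  then obtain X where X: "X \<subseteq> (\<Union>i\<in>K. I i)" "\<forall>i\<in>K. X \<union> {e} \<subseteq> span E (M i) (I i \<inter> X)" by blast
  have "\<not> (\<exists>J :: 'k \<Rightarrow> 'a set. \<exists>k\<in>K.
            (\<forall>i\<in>K. J i \<in> M i) \<and>
            (\<forall>i\<in>K. \<forall>j\<in>K. i \<noteq> j \<longrightarrow> J i \<inter> J j = {}) \<and>
            (\<Union>i\<in>K. J i) = (\<Union>i\<in>K. I i) \<union> {e} \<and>
            (finite {i\<in>K. I i \<noteq> J i} \<and> (\<forall>i\<in>K. finite ((I i - J i) \<union> (J i - I i)))) \<and>
            (\<forall>i\<in>K. i \<noteq> k \<longrightarrow> span E (M i) (J i) = span E (M i) (I i)) \<and>
            (\<exists>f\<in>J k. span E (M k) (J k - {f}) = span E (M k) (I k)))"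
  proof
    assume "\<exists>J :: 'k \<Rightarrow> 'a set. \<exists>k\<in>K.
            (\<forall>i\<in>K. J i \<in> M i) \<and>
            (\<forall>i\<in>K. \<forall>j\<in>K. i \<noteq> j \<longrightarrow> J i \<inter> J j = {}) \<and>
            (\<Union>i\<in>K. J i) = (\<Union>i\<in>K. I i) \<union> {e} \<and>
            (finite {i\<in>K. I i \<noteq> J i} \<and> (\<forall>i\<in>K. finite ((I i - J i) \<union> (J i - I i)))) \<and>
            (\<forall>i\<in>K. i \<noteq> k \<longrightarrow> span E (M i) (J i) = span E (M i) (I i)) \<and>
            (\<exists>f\<in>J k. span E (M k) (J k - {f}) = span E (M k) (I k))"
    then obtain J :: "'k \<Rightarrow> 'a set" where
      J: "\<forall>i\<in>K. J i \<in> M i" "\<forall>i\<in>K. \<forall>j\<in>K. i \<noteq> j \<longrightarrow> J i \<inter> J j = {}"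
         "(\<Union>i\<in>K. J i) = (\<Union>i\<in>K. I i) \<union> {e}"
         "finite {i\<in>K. I i \<noteq> J i}" "\<forall>i\<in>K. finite ((I i - J i) \<union> (J i - I i))"
      by blast
    show False by (rule dir1[OF matroids indep disj e J X])
  qed
  then show ?thesis using True by blast
next
  case False
  then show ?thesis using dir2[OF matroids indep disj e False] by blast
qed

end
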